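(* Let $n \ge k \ge 1$ be integers, let $s \in (0,1)$, $q = 1-s$ and $r = q/s$. Let $S$ be the (finite) set of states defined in the context, and let $P = (p_{xy})_{x,y \in S}$ be the transition matrix $$p_{xy} = r^{\,b(y)}\,\frac{s^k}{1-q^k}\,q^{\,\phi(|y|-|x|)} .$$ Define weights $\omega_x = r^{\,b(x)}$ for $x \in S$ and the probability vector $\nu_x = \omega_x / \sum_{z \in S} \omega_z$. Then $\nu$ is a stationary distribution of $P$, i.e. $\nu_y = \sum_{x \in S} \nu_x p_{xy}$ for every $y \in S$; moreover it is the unique stationary distribution.
   Context: Model: $k$ workers move in one direction around a closed loop of $n$ bins, never passing one another and never occupying the same bin. In each time step each worker moves bin by bin, performing at each bin an independent Bernoulli trial with success probability $s$, until it either has a success (and stops to collect a part) or is blocked by the worker directly ahead, who has stopped (it then ends one bin behind that worker without a success). States record the forward distances between consecutive workers and which workers were blocked. Formal definitions. Let $1^*$ be a formal symbol and set $|1^*| := 1$ and $|m| := m$ for positive integers $m$. The state space $S$ is the set of $k$-tuples $x = (x_1,\dots,x_k)$ with each $x_i \in \{1^*, 1, 2, \dots, n-k+1\}$, such that $\sum_{i=1}^k |x_i| = n$ and at most $k-1$ entries equal $1^*$. ($x_i$ is the distance from worker $i$ forward to worker $i+1$, indices mod $k$; $x_i = 1^*$ means worker $i$ is blocked.) For $x \in S$, $b(x)$ denotes the number of entries equal to $1^*$, and $|x| := (|x_1|,\dots,|x_k|) \in \mathbb{Z}^k$. For $\Delta = (d_1,\dots,d_k) \in \mathbb{Z}^k$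 with $\sum_i d_i = 0$, put $\gamma_j = \sum_{i=1}^j d_i$ for $j=1,\dots,k$, and $\phi(\Delta) = \sum_{j=1}^k \bigl(\gamma_j - \min_{1 \le i \le k} \gamma_i\bigr)$. ($\phi(\Delta)$ is the total number of Bernoulli failures needed to change the spacing by $\Delta$ when at least one worker moves zero bins after the common advance.) The matrix $P$ is the transition matrix of the warehouse process on $S$. *)

theory Defs
  imports Complex_Main
begin

text \<open>An entry of a state: either the formal symbol 1* (Star) or a positive integer m (Gap m).\<close>
datatype gap = Star | Gap nat

fun gabs :: "gap \<Rightarrow> nat" where
  "gabs Star = 1"
| "gabs (Gap m) = m"

text \<open>State space S: k-tuples (lists of length k), indices 0..k-1 standing for workers 1..k.\<close>
definition states :: "nat \<Rightarrow> nat \<Rightarrow> gap list set" where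
  "states n k = {x. length x = k
     \<and> (\<forall>e \<in> set x. e = Star \<or> (\<exists>m. e = Gap m \<and> 1 \<le> m \<and> m \<le> n - k + 1))
     \<and> sum_list (map gabs x) = n
     \<and> length (filter (\<lambda>e. e = Star) x) \<le> k - 1}"

definition blocked :: "gap list \<Rightarrow> nat" where
  "blocked x = length (filter (\<lambda>e. e = Star) x)"

definition absv :: "gap list \<Rightarrow> int list" where
  "absv x = map (\<lambda>e. int (gabs e)) x"

definition gam :: "int list \<Rightarrow> nat \<Rightarrow> int" where
  "gam d j = sum_list (take j d)"

definition phi :: "int list \<Rightarrow> int" where
  "phi d = (\<Sum>j = 1..length d. gam d j - Min {gam d i | i. 1 \<le> i \<and> i \<le> length d})"

definition trans_prob :: "nat \<Rightarrow> real \<Rightarrow> gap list \<Rightarrow> gap list \<Rightarrow> real" where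
  "trans_prob k s x y =
     ((1 - s) / s) ^ blocked y * (s ^ k / (1 - (1 - s) ^ k))
       * (1 - s) ^ nat (phi (map2 (-) (absv y) (absv x)))"

definition weight :: "real \<Rightarrow> gap list \<Rightarrow> real" where
  "weight s x = ((1 - s) / s) ^ blocked x"

definition nu :: "nat \<Rightarrow> nat \<Rightarrow> real \<Rightarrow> gap list \<Rightarrow> real" where
  "nu n k s x = weight s x / (\<Sum>z \<in> states n k. weight s z)"

end

theory Submission
  imports Defs "HOL-Library.FuncSet"
begin

definition prv :: "nat \<Rightarrow> nat \<Rightarrow> nat" where
  "prv k j = (if j = 0 then k - 1 else j - 1)"

lemma prv_lt: "j < k \<Longrightarrow> prv k j < k"
  unfolding prv_def by auto

lemma closure_prv:
  assumes "j0 \<in> Z" "j0 < k" "\<And>j. j < k \<Longrightarrow> j \<in> Z \<Longrightarrow> prv k j \<in> Z"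
  shows "\<forall>i<k. i \<in> Z"
proof -
  have a: "\<forall>t\<le>j0. j0 - t \<in> Z"
  proof (intro allI impI)
    fix t assume "t \<le> j0"
    then show "j0 - t \<in> Z"
    proof (induction t)
      case 0 then show ?case using assms by simp
    next
      case (Suc t)
      then have "j0 - t \<in> Z" "j0 - t < k" "j0 - t \<noteq> 0" using assms by auto
      then have "prv k (j0 - t) \<in> Z" using assms(3) by blast
      moreover have "prv k (j0 - t) = j0 - Suc t" unfolding prv_def using \<open>j0 - t \<noteq> 0\<close> by auto
      ultimately show ?case by simp
    qed
  qed
  then have "0 \<in> Z" by (metis diff_self_eq_0 order_refl)
  then have k1: "k - 1 \<in> Z" using assms(3)[of 0] assms(2) unfolding prv_def by auto
  have b: "\<forall>t<k. k - 1 - t \<in> Z"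
  proof (intro allI impI)
    fix t assume "t < k"
    then show "k - 1 - t \<in> Z"
    proof (induction t)
      case 0 then show ?case using k1 by simp
    next
      case (Suc t)
      then have "k - 1 - t \<in> Z" "k - 1 - t < k" "k - 1 - t \<noteq> 0" by auto
      then have "prv k (k - 1 - t) \<in> Z" using assms(3) by blast
      moreover have "prv k (k - 1 - t) = k - 1 - Suc t" unfolding prv_def using \<open>k - 1 - t \<noteq> 0\<close> by auto
      ultimately show ?case by simp
    qed
  qed
  show ?thesis
  proof (intro allI impI)
    fix i assume "i < k"
    have h: "k - 1 - (k - 1 - i) \<in> Z" by (rule b[rule_format]) (use \<open>i < k\<close> in arith)
    moreover have "k - 1 - (k - 1 - i) = i" using \<open>i < k\<close> by arith
    ultimately show "i \<in> Z" by simp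
  qed
qed

lemma const_prv:
  fixes f :: "nat \<Rightarrow> 'a"
  assumes "\<And>j. j < k \<Longrightarrow> f j = f (prv k j)" "j0 < k" "i < k"
  shows "f i = f j0"
proof -
  have "\<forall>i<k. i \<in> {i. f i = f j0}"
  proof (rule closure_prv[of j0 _ k])
    show "j0 \<in> {i. f i = f j0}" by simp
    show "j0 < k" by (rule assms(2))
    fix j assume "j < k" "j \<in> {i. f i = f j0}"
    then show "prv k j \<in> {i. f i = f j0}" using assms(1)[of j] by simp
  qed
  then show ?thesis using assms(3) by blast
qed

lemma sum_prv:
  fixes m :: "nat \<Rightarrow> 'a::comm_monoid_add"
  assumes "1 \<le> k"
  shows "(\<Sum>j<k. m (prv k j)) = (\<Sum>j<k. m j)"
proof -
  have "bij_betw (prv k) {..<k} {..<k}"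
  proof (rule bij_betw_imageI)
    show "inj_on (prv k) {..<k}" unfolding inj_on_def prv_def by auto
    show "prv k ` {..<k} = {..<k}"
    proof
      show "prv k ` {..<k} \<subseteq> {..<k}" using prv_lt by auto
      show "{..<k} \<subseteq> prv k ` {..<k}"
      proof
        fix i assume "i \<in> {..<k}"
        show "i \<in> prv k ` {..<k}"
        proof (cases "i = k - 1")
          case True then have "i = prv k 0" unfolding prv_def by auto
          then show ?thesis using assms by auto
        next
          case False then have "i = prv k (Suc i)" "Suc i < k" using \<open>i \<in> {..<k}\<close> unfolding prv_def by auto
          then show ?thesis by blast
        qed
      qed
    qed
  qed
  then show ?thesis using sum.reindex_bij_betw by blast
qed

lemma le_bound_from_sum:
  fixes f :: "nat \<Rightarrow> nat"
  assumes "(\<Sum>i<k. f i) = n" "\<And>i. i < k \<Longrightarrow> 1 \<le> f i" "j < k"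
  shows "f j \<le> n - k + 1"
proof -
  have "(\<Sum>i<k. f i) = f j + (\<Sum>i\<in>{..<k} - {j}. f i)"
    using assms(3) by (simp add: sum.remove)
  moreover have "(\<Sum>i\<in>{..<k} - {j}. f i) \<ge> (\<Sum>i\<in>{..<k} - {j}. 1)"
    using assms(2) by (intro sum_mono) auto
  moreover have "(\<Sum>i\<in>{..<k} - {j}. (1::nat)) = k - 1" using assms(3) by simp
  ultimately show ?thesis using assms by linarith
qed

definition pp :: "real \<Rightarrow> nat \<Rightarrow> nat \<Rightarrow> real" where
  "pp s N g = (if g < N then s * (1 - s) ^ g else (1 - s) ^ N)"

lemma pp_tail: "a \<le> N \<Longrightarrow> (\<Sum>g\<in>{a..N}. pp s N g) = (1 - s) ^ a"
proof (induction "N - a" arbitrary: a)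
  case 0 then have "a = N" by simp
  then show ?case by (simp add: pp_def)
next
  case (Suc d)
  then have "a < N" by simp
  have "{a..N} = insert a {Suc a..N}" using \<open>a < N\<close> by auto
  then have "(\<Sum>g\<in>{a..N}. pp s N g) = pp s N a + (\<Sum>g\<in>{Suc a..N}. pp s N g)" by simp
  also have "\<dots> = s * (1 - s) ^ a + (1 - s) ^ Suc a"
    using Suc \<open>a < N\<close> by (simp add: pp_def)
  also have "\<dots> = (1 - s) ^ a" by (simp add: algebra_simps)
  finally show ?case .
qed


lemma states_props:
  assumes "x \<in> states n k"
  shows "length x = k" "\<And>j. j < k \<Longrightarrow> 1 \<le> gabs (x!j)" "(\<Sum>j<k. gabs (x!j)) = n"
    "length (filter (\<lambda>e. e = Star) x) \<le> k - 1"
proof -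
  show lx: "length x = k" using assms unfolding states_def by auto
  show "1 \<le> gabs (x!j)" if "j < k" for j
  proof -
    have "x!j \<in> set x" using lx that by auto
    then have "x!j = Star \<or> (\<exists>m. x!j = Gap m \<and> 1 \<le> m \<and> m \<le> n - k + 1)"
      using assms unfolding states_def by auto
    then show ?thesis by auto
  qed
  have "sum_list (map gabs x) = n" using assms unfolding states_def by auto
  then show "(\<Sum>j<k. gabs (x!j)) = n" using lx
    by (simp add: sum_list_sum_nth atLeast0LessThan)
  show "length (filter (\<lambda>e. e = Star) x) \<le> k - 1" using assms unfolding states_def by auto
qed

locale wh =
  fixes n k :: nat and y :: "gap list"
  assumes k1: "1 \<le> k" and kn: "k \<le> n" and yS: "y \<in> states n k"
begin

definition c :: "nat \<Rightarrow> nat" where "c j = gabs (y!j)"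
definition dd :: "gap list \<Rightarrow> int list" where "dd x = map2 (-) (absv y) (absv x)"
definition M :: "gap list \<Rightarrow> int" where "M x = Min {gam (dd x) i | i. 1 \<le> i \<and> i \<le> k}"
definition mx :: "gap list \<Rightarrow> nat \<Rightarrow> nat" where "mx x j = nat (gam (dd x) (Suc j) - M x)"
definition NN :: nat where "NN = 2 * n + 1"
definition F :: "gap list \<Rightarrow> (nat \<Rightarrow> nat) set" where
  "F x = PiE {..<k} (\<lambda>j. if x!j = Star then {Suc (mx x j)..NN} else {mx x j})"
definition GG :: "(nat \<Rightarrow> nat) set" where
  "GG = {G \<in> PiE {..<k} (\<lambda>_. {0..NN}). \<exists>j<k. G j = 0}"
definition fp :: "(nat \<Rightarrow> nat) \<Rightarrow> (nat \<Rightarrow> nat) \<Rightarrow> bool" where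
  "fp G m \<longleftrightarrow> (\<forall>j<k. m j = min (G j) (m (prv k j) + c j - 1))"

lemma c_ge1: "j < k \<Longrightarrow> 1 \<le> c j"
  using states_props(2)[OF yS] unfolding c_def by auto

lemma sum_c: "(\<Sum>j<k. c j) = n"
  using states_props(3)[OF yS] unfolding c_def by auto

lemma ly: "length y = k" using states_props(1)[OF yS] .

lemma dd_len: "x \<in> states n k \<Longrightarrow> length (dd x) = k"
  using states_props(1) ly unfolding dd_def absv_def by simp

lemma dd_nth: "x \<in> states n k \<Longrightarrow> j < k \<Longrightarrow> dd x ! j = int (c j) - int (gabs (x!j))"
  using states_props(1) ly unfolding dd_def absv_def c_def by simp

lemma gam_sum:
  assumes "x \<in> states n k" "j \<le> k"
  shows "gam (dd x) j = (\<Sum>i<j. int (c i) - int (gabs (x!i)))"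
  using assms(2)
proof (induction j)
  case 0 then show ?case by (simp add: gam_def)
next
  case (Suc j)
  then have "j < length (dd x)" using dd_len[OF assms(1)] by simp
  then have "gam (dd x) (Suc j) = gam (dd x) j + dd x ! j"
    unfolding gam_def by (simp add: take_Suc_conv_app_nth)
  then show ?case using Suc dd_nth[OF assms(1), of j] by simp
qed

lemma gam_k: "x \<in> states n k \<Longrightarrow> gam (dd x) k = 0"
proof -
  assume xS: "x \<in> states n k"
  have "gam (dd x) k = (\<Sum>i<k. int (c i)) - (\<Sum>i<k. int (gabs (x!i)))"
    using gam_sum[OF xS, of k] by (simp add: sum_subtractf)
  also have "\<dots> = int (\<Sum>i<k. c i) - int (\<Sum>i<k. gabs (x!i))" by simp
  also have "\<dots> = 0" using sum_c states_props(3)[OF xS] by simp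
  finally show ?thesis .
qed

lemma gam_bounds:
  assumes "x \<in> states n k" "j \<le> k"
  shows "- int n \<le> gam (dd x) j" "gam (dd x) j \<le> int n"
proof -
  have e: "gam (dd x) j = int (\<Sum>i<j. c i) - int (\<Sum>i<j. gabs (x!i))"
    using gam_sum[OF assms] by (simp add: sum_subtractf)
  have "(\<Sum>i<j. c i) \<le> (\<Sum>i<k. c i)" using assms(2) by (intro sum_mono2) auto
  then have a: "(\<Sum>i<j. c i) \<le> n" using sum_c by simp
  have "(\<Sum>i<j. gabs (x!i)) \<le> (\<Sum>i<k. gabs (x!i))" using assms(2) by (intro sum_mono2) auto
  then have b: "(\<Sum>i<j. gabs (x!i)) \<le> n" using states_props(3)[OF assms(1)] by simp
  show "- int n \<le> gam (dd x) j" using e b by linarith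
  show "gam (dd x) j \<le> int n" using e a by linarith
qed

lemma M_eq: "M x = Min (gam (dd x) ` {1..k})"
proof -
  have "{gam (dd x) i | i. 1 \<le> i \<and> i \<le> k} = gam (dd x) ` {1..k}" by auto
  then show ?thesis unfolding M_def by simp
qed

lemma M_le: "1 \<le> i \<Longrightarrow> i \<le> k \<Longrightarrow> M x \<le> gam (dd x) i"
  unfolding M_eq by (intro Min_le) auto

lemma M_att: "\<exists>i\<in>{1..k}. M x = gam (dd x) i"
proof -
  have "M x \<in> gam (dd x) ` {1..k}" unfolding M_eq using k1 by (intro Min_in) auto
  then show ?thesis by auto
qed

lemma mx_int: "j < k \<Longrightarrow> int (mx x j) = gam (dd x) (Suc j) - M x"
  unfolding mx_def using M_le[of "Suc j" x] by simp

lemma mx_zero: "\<exists>j<k. mx x j = 0"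
proof -
  obtain i where "i \<in> {1..k}" "M x = gam (dd x) i" using M_att by blast
  then have "i - 1 < k" "mx x (i - 1) = 0" unfolding mx_def by auto
  then show ?thesis by blast
qed

lemma mx_bound: "x \<in> states n k \<Longrightarrow> j < k \<Longrightarrow> mx x j \<le> 2 * n"
proof -
  assume xS: "x \<in> states n k" and j: "j < k"
  obtain i where "i \<in> {1..k}" "M x = gam (dd x) i" using M_att by blast
  then have "- int n \<le> M x" using gam_bounds[OF xS, of i] by simp
  moreover have "gam (dd x) (Suc j) \<le> int n" using gam_bounds[OF xS, of "Suc j"] j by simp
  ultimately have "int (mx x j) \<le> 2 * int n" using mx_int[OF j, of x] by simp
  then show ?thesis by simp
qed

lemma mx_diff:
  assumes xS: "x \<in> states n k" and j: "j < k"
  shows "int (mx x j) - int (mx x (prv k j)) = int (c j) - int (gabs (x!j))"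
proof (cases "j = 0")
  case True
  then have "prv k j = k - 1" unfolding prv_def by simp
  then have "int (mx x j) - int (mx x (prv k j)) = gam (dd x) 1 - gam (dd x) k"
    using mx_int[of j x] mx_int[of "k - 1" x] j True k1 by simp
  also have "\<dots> = int (c j) - int (gabs (x!j))"
    using gam_k[OF xS] gam_sum[OF xS, of 1] True k1 by simp
  finally show ?thesis .
next
  case False
  then have "prv k j = j - 1" unfolding prv_def by simp
  then have "int (mx x j) - int (mx x (prv k j)) = gam (dd x) (Suc j) - gam (dd x) j"
    using mx_int[of j x] mx_int[of "j - 1" x] j False by simp
  also have "\<dots> = int (c j) - int (gabs (x!j))"
    using gam_sum[OF xS, of "Suc j"] gam_sum[OF xS, of j] j by simp
  finally show ?thesis .
qed

lemma phi_eq: "x \<in> states n k \<Longrightarrow> phi (dd x) = int (\<Sum>j<k. mx x j)"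
proof -
  assume xS: "x \<in> states n k"
  have "phi (dd x) = (\<Sum>j = 1..k. gam (dd x) j - M x)"
    by (simp add: phi_def M_def dd_len[OF xS])
  also have "\<dots> = (\<Sum>j<k. gam (dd x) (Suc j) - M x)"
    using sum.atLeast1_atMost_eq[of "\<lambda>j. gam (dd x) j - M x" k] by simp
  also have "\<dots> = (\<Sum>j<k. int (mx x j))" using mx_int by simp
  finally show ?thesis by simp
qed


lemma fp_le: "fp G m \<Longrightarrow> j < k \<Longrightarrow> m j \<le> G j"
  unfolding fp_def by (metis min.cobounded1)

lemma fp_unique_aux:
  assumes fm: "fp G m" and fm': "fp G m'" and j0: "j0 < k" "G j0 = 0"
  shows "\<not> (\<exists>j<k. m' j < m j)"
proof
  assume "\<exists>j<k. m' j < m j"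
  then obtain j1 where j1: "j1 < k" "m' j1 < m j1" by blast
  define f where "f j = int (m j) - int (m' j)" for j
  define D where "D = Max (f ` {..<k})"
  have Dge: "f j \<le> D" if "j < k" for j unfolding D_def using that by (intro Max_ge) auto
  have "D \<in> f ` {..<k}" unfolding D_def using k1 by (intro Max_in) (auto simp: lessThan_empty_iff)
  then obtain jd where jd: "jd < k" "f jd = D" by auto
  have Dpos: "D > 0" using Dge[OF j1(1)] j1(2) unfolding f_def by simp
  have "\<forall>i<k. i \<in> {j. f j = D}"
  proof (rule closure_prv[of jd _ k])
    show "jd \<in> {j. f j = D}" using jd by simp
    show "jd < k" by (rule jd(1))
    fix j assume j: "j < k" "j \<in> {j. f j = D}"
    let ?p = "prv k j"
    have lt: "m' j < m j" using j Dpos unfolding f_def by simp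
    have cj: "1 \<le> c j" using c_ge1 j by simp
    have a: "m j \<le> G j" "m j \<le> m ?p + c j - 1" using fm j unfolding fp_def by (metis min.cobounded1, metis min.cobounded2)
    have b: "m' j = min (G j) (m' ?p + c j - 1)" using fm' j unfolding fp_def by blast
    then have "m' j = m' ?p + c j - 1" using lt a by linarith
    then have "f ?p \<ge> f j" using a cj unfolding f_def by linarith
    moreover have "f ?p \<le> D" using Dge prv_lt j by blast
    ultimately show "?p \<in> {j. f j = D}" using j by simp
  qed
  then have "f j0 = D" using j0 by blast
  moreover have "m j0 \<le> 0" using fp_le[OF fm j0(1)] j0 by simp
  ultimately show False using Dpos unfolding f_def by simp
qed

lemma fp_unique:
  assumes "fp G m" "fp G m'" "j0 < k" "G j0 = 0" "j < k"
  shows "m j = m' j"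
  using fp_unique_aux[OF assms(1-4)] fp_unique_aux[OF assms(2,1,3,4)] assms(5)
  by (meson linorder_neqE_nat)

lemma fp_exists: "\<exists>m. fp G m"
proof -
  define P where "P m \<longleftrightarrow> (\<forall>j<k. m j \<le> G j \<and> m j + 1 \<le> m (prv k j) + c j)" for m :: "nat \<Rightarrow> nat"
  define f where "f m = (\<Sum>j<k. m j)" for m :: "nat \<Rightarrow> nat"
  have P0: "P (\<lambda>_. 0)" unfolding P_def using c_ge1 by auto
  have bd: "\<forall>m. P m \<longrightarrow> f m < Suc (\<Sum>j<k. G j)"
    unfolding P_def f_def by (auto intro!: le_imp_less_Suc sum_mono)
  obtain m where Pm: "P m" and mx: "\<And>m'. P m' \<Longrightarrow> f m' \<le> f m"
    using ex_has_greatest_nat[of P "\<lambda>_. 0" f, OF P0 bd] by blast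
  have "fp G m" unfolding fp_def
  proof (intro allI impI)
    fix j assume j: "j < k"
    have cj: "1 \<le> c j" using c_ge1 j by simp
    have a: "m j \<le> G j" "m j + 1 \<le> m (prv k j) + c j" using Pm j unfolding P_def by auto
    show "m j = min (G j) (m (prv k j) + c j - 1)"
    proof (rule ccontr)
      assume "m j \<noteq> min (G j) (m (prv k j) + c j - 1)"
      then have lt: "m j < G j" "m j + 2 \<le> m (prv k j) + c j" using a cj by auto
      define m' where "m' = m(j := Suc (m j))"
      have "P m'" unfolding P_def
      proof (intro allI impI)
        fix i assume i: "i < k"
        have ge: "m (prv k i) \<le> m' (prv k i)" unfolding m'_def by simp
        show "m' i \<le> G i \<and> m' i + 1 \<le> m' (prv k i) + c i"
        proof (cases "i = j")
          case True then show ?thesis using lt ge unfolding m'_def by auto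
        next
          case False then show ?thesis using Pm i ge unfolding m'_def P_def by fastforce
        qed
      qed
      moreover have "f m' = f m + 1"
      proof -
        have "f m' = m' j + (\<Sum>i\<in>{..<k} - {j}. m' i)" unfolding f_def using j by (simp add: sum.remove)
        moreover have "f m = m j + (\<Sum>i\<in>{..<k} - {j}. m i)" unfolding f_def using j by (simp add: sum.remove)
        moreover have "(\<Sum>i\<in>{..<k} - {j}. m' i) = (\<Sum>i\<in>{..<k} - {j}. m i)"
          unfolding m'_def by (intro sum.cong) auto
        ultimately show ?thesis unfolding m'_def by simp
      qed
      ultimately show False using mx by fastforce
    qed
  qed
  then show ?thesis by blast
qed


lemma F_mem:
  assumes "G \<in> F x" "j < k"
  shows "x!j = Star \<Longrightarrow> Suc (mx x j) \<le> G j \<and> G j \<le> NN" "x!j \<noteq> Star \<Longrightarrow> G j = mx x j"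
proof -
  have h: "G j \<in> (if x!j = Star then {Suc (mx x j)..NN} else {mx x j})"
    using assms unfolding F_def PiE_iff by blast
  show "x!j = Star \<Longrightarrow> Suc (mx x j) \<le> G j \<and> G j \<le> NN" using h by simp
  show "x!j \<noteq> Star \<Longrightarrow> G j = mx x j" using h by simp
qed

lemma gap_cases: "e \<noteq> Star \<Longrightarrow> e = Gap (gabs e)"
  by (cases e) auto

lemma F_fp:
  assumes xS: "x \<in> states n k" and G: "G \<in> F x"
  shows "fp G (mx x)"
  unfolding fp_def
proof (intro allI impI)
  fix j assume j: "j < k"
  have d: "int (mx x j) - int (mx x (prv k j)) = int (c j) - int (gabs (x!j))" using mx_diff[OF xS j] .
  have a1: "1 \<le> gabs (x!j)" using states_props(2)[OF xS j] .
  have cj: "1 \<le> c j" using c_ge1 j by simp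
  show "mx x j = min (G j) (mx x (prv k j) + c j - 1)"
  proof (cases "x!j = Star")
    case True
    then have "gabs (x!j) = 1" by simp
    then have "mx x j = mx x (prv k j) + c j - 1" using d cj by linarith
    moreover have "Suc (mx x j) \<le> G j" using F_mem(1)[OF G j True] by simp
    ultimately show ?thesis by simp
  next
    case False
    then have "G j = mx x j" using F_mem(2)[OF G j] by simp
    moreover have "mx x j \<le> mx x (prv k j) + c j - 1" using d a1 cj by linarith
    ultimately show ?thesis by simp
  qed
qed

lemma F_sub:
  assumes xS: "x \<in> states n k" and G: "G \<in> F x"
  shows "G \<in> GG"
proof -
  have lx: "length x = k" using states_props(1)[OF xS] .
  have ext: "G \<in> extensional {..<k}" using G unfolding F_def by (simp add: PiE_iff)
  have bd: "G j \<in> {0..NN}" if j: "j < k" for j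
  proof (cases "x!j = Star")
    case True then show ?thesis using F_mem(1)[OF G j] by simp
  next
    case False then show ?thesis using F_mem(2)[OF G j] mx_bound[OF xS j] unfolding NN_def by simp
  qed
  have "\<exists>j<k. G j = 0"
  proof (rule ccontr)
    assume nz: "\<not> (\<exists>j<k. G j = 0)"
    obtain j1 where j1: "j1 < k" "mx x j1 = 0" using mx_zero by blast
    have "\<forall>i<k. i \<in> {j. mx x j = 0}"
    proof (rule closure_prv[of j1 _ k])
      show "j1 \<in> {j. mx x j = 0}" using j1 by simp
      show "j1 < k" by (rule j1(1))
      fix j assume j: "j < k" "j \<in> {j. mx x j = 0}"
      have st: "x!j = Star"
      proof (rule ccontr)
        assume "x!j \<noteq> Star"
        then have "G j = 0" using F_mem(2)[OF G j(1)] j(2) by simp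
        with nz j(1) show False by blast
      qed
      have d: "int (mx x j) - int (mx x (prv k j)) = int (c j) - int (gabs (x!j))" using mx_diff[OF xS j(1)] .
      have cj: "1 \<le> c j" using c_ge1 j by simp
      show "prv k j \<in> {j. mx x j = 0}" using d cj st j by simp
    qed
    then have allz: "\<forall>i<k. mx x i = 0" by blast
    have allst: "\<forall>i<k. x!i = Star"
    proof (intro allI impI)
      fix i assume i: "i < k"
      show "x!i = Star"
      proof (rule ccontr)
        assume "x!i \<noteq> Star"
        then have "G i = 0" using F_mem(2)[OF G i] allz i by simp
        with nz i show False by blast
      qed
    qed
    have "filter (\<lambda>e. e = Star) x = x"
      using allst lx by (auto simp: filter_id_conv in_set_conv_nth)
    then show False using states_props(4)[OF xS] lx k1 by simp
  qed
  then show ?thesis unfolding GG_def using ext bd by (auto simp: PiE_iff)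
qed

lemma F_disj:
  assumes xS: "x \<in> states n k" and xS': "x' \<in> states n k" and G: "G \<in> F x" "G \<in> F x'"
  shows "x = x'"
proof -
  obtain j0 where j0: "j0 < k" "G j0 = 0" using F_sub[OF xS G(1)] unfolding GG_def by blast
  have eqm: "mx x j = mx x' j" if "j < k" for j
    using fp_unique[OF F_fp[OF xS G(1)] F_fp[OF xS' G(2)] j0 that] .
  show ?thesis
  proof (rule nth_equalityI)
    show "length x = length x'" using states_props(1)[OF xS] states_props(1)[OF xS'] by simp
    fix j assume "j < length x"
    then have j: "j < k" using states_props(1)[OF xS] by simp
    show "x!j = x'!j"
    proof (cases "x!j = Star"; cases "x'!j = Star")
      assume "x!j = Star" "x'!j = Star" then show ?thesis by simp
    next
      assume a: "x!j = Star" "x'!j \<noteq> Star"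
      then show ?thesis using F_mem(1)[OF G(1) j] F_mem(2)[OF G(2) j] eqm[OF j] by simp
    next
      assume a: "x!j \<noteq> Star" "x'!j = Star"
      then show ?thesis using F_mem(2)[OF G(1) j] F_mem(1)[OF G(2) j] eqm[OF j] by simp
    next
      assume a: "x!j \<noteq> Star" "x'!j \<noteq> Star"
      have "int (gabs (x!j)) = int (gabs (x'!j))"
        using mx_diff[OF xS j] mx_diff[OF xS' j] eqm[OF j] eqm[OF prv_lt[OF j]] by simp
      then have "gabs (x!j) = gabs (x'!j)" by simp
      then show ?thesis using gap_cases[OF a(1)] gap_cases[OF a(2)] by metis
    qed
  qed
qed

lemma GG_cover:
  assumes G: "G \<in> GG"
  shows "\<exists>x\<in>states n k. G \<in> F x"
proof -
  obtain m where fm: "fp G m" using fp_exists by blast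
  obtain j0 where j0: "j0 < k" "G j0 = 0" using G unfolding GG_def by blast
  have GPi: "G \<in> PiE {..<k} (\<lambda>_. {0..NN})" using G unfolding GG_def by blast
  define x where "x = map (\<lambda>j. if m j < G j then Star else Gap (c j + m (prv k j) - m j)) [0..<k]"
  have lx: "length x = k" unfolding x_def by simp
  have xj: "x!j = (if m j < G j then Star else Gap (c j + m (prv k j) - m j))" if "j < k" for j
    unfolding x_def using that by simp
  have fpj: "m j \<le> G j \<and> m j + 1 \<le> m (prv k j) + c j \<and> (m j < G j \<longrightarrow> m j + 1 = m (prv k j) + c j)"
    if j: "j < k" for j
  proof -
    have "m j = min (G j) (m (prv k j) + c j - 1)" using fm j unfolding fp_def by blast
    moreover have "1 \<le> c j" using c_ge1 j by simp
    ultimately show ?thesis by linarith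
  qed
  have gx: "gabs (x!j) = c j + m (prv k j) - m j" if j: "j < k" for j
    using xj[OF j] fpj[OF j] by auto
  have gx1: "1 \<le> gabs (x!j)" if j: "j < k" for j using gx[OF j] fpj[OF j] by arith
  have gxi: "int (gabs (x!j)) = int (c j) + int (m (prv k j)) - int (m j)" if j: "j < k" for j
    using gx[OF j] fpj[OF j] by simp
  have sumx: "(\<Sum>j<k. gabs (x!j)) = n"
  proof -
    have "int (\<Sum>j<k. gabs (x!j)) = (\<Sum>j<k. int (c j) + int (m (prv k j)) - int (m j))"
      using gxi by simp
    also have "\<dots> = (\<Sum>j<k. int (c j)) + (\<Sum>j<k. int (m (prv k j))) - (\<Sum>j<k. int (m j))"
      by (simp add: sum.distrib sum_subtractf)
    also have "\<dots> = int n" using sum_prv[OF k1, of "\<lambda>j. int (m j)"] sum_c by (simp flip: of_nat_sum)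
    finally show ?thesis by (simp only: of_nat_eq_iff)
  qed
  have xS: "x \<in> states n k"
    unfolding states_def
  proof (intro CollectI conjI)
    show "length x = k" by (rule lx)
    show "\<forall>e\<in>set x. e = Star \<or> (\<exists>a. e = Gap a \<and> 1 \<le> a \<and> a \<le> n - k + 1)"
    proof
      fix e assume "e \<in> set x"
      then obtain j where j: "j < k" "e = x!j" using lx by (auto simp: in_set_conv_nth)
      have "gabs e \<le> n - k + 1" using le_bound_from_sum[of "\<lambda>j. gabs (x!j)" k n j] sumx gx1 j by simp
      moreover have "1 \<le> gabs e" using gx1 j by simp
      ultimately show "e = Star \<or> (\<exists>a. e = Gap a \<and> 1 \<le> a \<and> a \<le> n - k + 1)" by (cases e) auto
    qed
    show "sum_list (map gabs x) = n" using sumx lx by (simp add: sum_list_sum_nth atLeast0LessThan)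
    have "x!j0 \<noteq> Star" using xj[OF j0(1)] fpj[OF j0(1)] j0 by simp
    moreover have "x!j0 \<in> set x" using lx j0 by simp
    ultimately have "length (filter (\<lambda>e. e = Star) x) < length x" by (intro length_filter_less) auto
    then show "length (filter (\<lambda>e. e = Star) x) \<le> k - 1" using lx by simp
  qed
  define h where "h j = int (m j) - int (mx x j)" for j
  have hp: "h j = h (prv k j)" if j: "j < k" for j
    using mx_diff[OF xS j] gxi[OF j] unfolding h_def by simp
  obtain j1 where j1: "j1 < k" "mx x j1 = 0" using mx_zero by blast
  have "h j1 = h j0" using const_prv[of k h j0 j1, OF hp j0(1) j1(1)] by simp
  moreover have "h j1 \<ge> 0" unfolding h_def using j1 by simp
  moreover have "h j0 \<le> 0" unfolding h_def using fpj[OF j0(1)] j0 by simp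
  ultimately have h0: "h j0 = 0" by simp
  have meq: "m i = mx x i" if i: "i < k" for i
    using const_prv[of k h j0 i, OF hp j0(1) i] h0 unfolding h_def by simp
  have "G \<in> F x" unfolding F_def
  proof (subst PiE_iff, intro conjI ballI)
    show "G \<in> extensional {..<k}" using GPi by (simp add: PiE_iff)
    fix j assume "j \<in> {..<k}"
    then have j: "j < k" by simp
    have GN: "G j \<le> NN" using GPi j by (auto simp: PiE_iff)
    show "G j \<in> (if x!j = Star then {Suc (mx x j)..NN} else {mx x j})"
    proof (cases "m j < G j")
      case True then show ?thesis using xj[OF j] meq[OF j] GN by simp
    next
      case False then show ?thesis using xj[OF j] meq[OF j] fpj[OF j] by simp
    qed
  qed
  then show ?thesis using xS by blast
qed


lemma card_split:
  fixes P :: "nat \<Rightarrow> bool"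
  shows "card ({..<k} \<inter> {j. P j}) + card ({..<k} \<inter> - {j. P j}) = k"
proof -
  have "card (({..<k} \<inter> {j. P j}) \<union> ({..<k} \<inter> - {j. P j})) = card ({..<k} \<inter> {j. P j}) + card ({..<k} \<inter> - {j. P j})"
    by (intro card_Un_disjoint) auto
  moreover have "({..<k} \<inter> {j. P j}) \<union> ({..<k} \<inter> - {j. P j}) = {..<k}" by auto
  ultimately show ?thesis by simp
qed

lemma blocked_card: "x \<in> states n k \<Longrightarrow> blocked x = card ({..<k} \<inter> {j. x!j = Star})"
proof -
  assume xS: "x \<in> states n k"
  have "blocked x = card {i. i < length x \<and> x!i = Star}"
    unfolding blocked_def by (rule length_filter_conv_card)
  moreover have "{i. i < length x \<and> x!i = Star} = {..<k} \<inter> {j. x!j = Star}"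
    using states_props(1)[OF xS] by auto
  ultimately show ?thesis by simp
qed

lemma F_weight:
  fixes s :: real
  assumes s: "0 < s" "s < 1" and xS: "x \<in> states n k"
  shows "(\<Sum>G\<in>F x. \<Prod>j<k. pp s NN (G j)) = s ^ k * ((1 - s) / s) ^ blocked x * (1 - s) ^ (\<Sum>j<k. mx x j)"
proof -
  define B where "B j = (if x!j = Star then {Suc (mx x j)..NN} else {mx x j})" for j
  have "(\<Sum>G\<in>F x. \<Prod>j<k. pp s NN (G j)) = (\<Prod>j<k. sum (pp s NN) (B j))"
    unfolding F_def B_def by (rule prod_sum_PiE[symmetric]) auto
  also have "\<dots> = (\<Prod>j<k. (if x!j = Star then 1 - s else s) * (1 - s) ^ mx x j)"
  proof (rule prod.cong)
    fix j assume "j \<in> {..<k}"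
    then have j: "j < k" by simp
    have lt: "mx x j < NN" using mx_bound[OF xS j] unfolding NN_def by simp
    show "sum (pp s NN) (B j) = (if x!j = Star then 1 - s else s) * (1 - s) ^ mx x j"
    proof (cases "x!j = Star")
      case True
      then have "sum (pp s NN) (B j) = (1 - s) ^ Suc (mx x j)" unfolding B_def using pp_tail[of "Suc (mx x j)" NN s] lt by simp
      then show ?thesis using True by simp
    next
      case False
      then show ?thesis unfolding B_def pp_def using lt by simp
    qed
  qed simp
  also have "\<dots> = (\<Prod>j<k. (if x!j = Star then 1 - s else s)) * (1 - s) ^ (\<Sum>j<k. mx x j)"
    by (simp add: prod.distrib power_sum)
  also have "(\<Prod>j<k. (if x!j = Star then 1 - s else s)) = (1 - s) ^ blocked x * s ^ (k - blocked x)"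
  proof -
    have "(\<Prod>j<k. (if x!j = Star then 1 - s else s))
        = (\<Prod>j\<in>{..<k} \<inter> {j. x!j = Star}. 1 - s) * (\<Prod>j\<in>{..<k} \<inter> - {j. x!j = Star}. s)"
      by (rule prod.If_cases) simp
    also have "\<dots> = (1 - s) ^ blocked x * s ^ (k - blocked x)"
    proof -
      have "card ({..<k} \<inter> - {j. x!j = Star}) = k - blocked x"
        using blocked_card[OF xS] card_split[of "\<lambda>j. x!j = Star"] by arith
      then show ?thesis using blocked_card[OF xS] by simp
    qed
    finally show ?thesis .
  qed
  also have "(1 - s) ^ blocked x * s ^ (k - blocked x) = s ^ k * ((1 - s) / s) ^ blocked x"
  proof -
    have bk: "blocked x \<le> k" using blocked_card[OF xS] card_split[of "\<lambda>j. x!j = Star"] by simp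
    have "s ^ k = s ^ (k - blocked x) * s ^ blocked x" using bk by (simp flip: power_add)
    then show ?thesis using s by (simp add: power_divide field_simps)
  qed
  finally show ?thesis by simp
qed

lemma GG_split: "GG = PiE {..<k} (\<lambda>_. {0..NN}) - PiE {..<k} (\<lambda>_. {1..NN})"
proof -
  have "G \<in> GG \<longleftrightarrow> G \<in> PiE {..<k} (\<lambda>_. {0..NN}) - PiE {..<k} (\<lambda>_. {1..NN})" for G
  proof -
    have "G \<in> PiE {..<k} (\<lambda>_. {1..NN}) \<longleftrightarrow> G \<in> PiE {..<k} (\<lambda>_. {0..NN}) \<and> (\<forall>j<k. G j \<noteq> 0)"
      by (auto simp: PiE_iff Suc_le_eq)
    then show ?thesis unfolding GG_def by auto
  qed
  then show ?thesis by blast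
qed

lemma PiE_sum_const:
  fixes f :: "nat \<Rightarrow> real"
  assumes "finite A"
  shows "(\<Sum>G\<in>PiE {..<k} (\<lambda>_. A). \<Prod>j<k. f (G j)) = (sum f A) ^ k"
proof -
  have "(\<Sum>G\<in>PiE {..<k} (\<lambda>_. A). \<Prod>j<k. f (G j)) = (\<Prod>j<k. sum f A)"
    by (rule prod_sum_PiE[symmetric]) (simp_all add: assms)
  then show ?thesis by simp
qed

lemma GG_sum:
  fixes s :: real
  shows "(\<Sum>G\<in>GG. \<Prod>j<k. pp s NN (G j)) = 1 - (1 - s) ^ k"
proof -
  have sub: "PiE {..<k} (\<lambda>_. {1..NN}) \<subseteq> PiE {..<k} (\<lambda>_. {0..NN})"
    by (rule PiE_mono) auto
  have t0: "sum (pp s NN) {0..NN} = 1" using pp_tail[of 0 NN s] by (simp only: le0 power_0)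
  have t1: "sum (pp s NN) {1..NN} = 1 - s" using pp_tail[of 1 NN s] unfolding NN_def by (simp only: power_one_right le_add2)
  have fin: "finite (PiE {..<k} (\<lambda>_. {0..NN}))" by (intro finite_PiE) auto
  have "(\<Sum>G\<in>GG. \<Prod>j<k. pp s NN (G j))
      = (\<Sum>G\<in>PiE {..<k} (\<lambda>_. {0..NN}). \<Prod>j<k. pp s NN (G j)) - (\<Sum>G\<in>PiE {..<k} (\<lambda>_. {1..NN}). \<Prod>j<k. pp s NN (G j))"
    unfolding GG_split by (rule sum_diff[OF fin sub])
  also have "\<dots> = 1 - (1 - s) ^ k" unfolding PiE_sum_const[OF finite_atLeastAtMost] t0 t1 by simp
  finally show ?thesis .
qed

lemma finite_states: "finite (states n k)"
proof -
  have "states n k \<subseteq> {xs. set xs \<subseteq> insert Star (Gap ` {1..n}) \<and> length xs = k}"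
  proof
    fix x assume "x \<in> states n k"
    then have a: "\<forall>e\<in>set x. e = Star \<or> (\<exists>m. e = Gap m \<and> 1 \<le> m \<and> m \<le> n - k + 1)" "length x = k"
      unfolding states_def by auto
    have "set x \<subseteq> insert Star (Gap ` {1..n})"
    proof
      fix e assume "e \<in> set x"
      then have "e = Star \<or> (\<exists>m. e = Gap m \<and> 1 \<le> m \<and> m \<le> n - k + 1)" using a by blast
      then show "e \<in> insert Star (Gap ` {1..n})" using k1 kn by auto
    qed
    then show "x \<in> {xs. set xs \<subseteq> insert Star (Gap ` {1..n}) \<and> length xs = k}" using a by simp
  qed
  moreover have "finite {xs. set xs \<subseteq> insert Star (Gap ` {1..n}) \<and> length xs = k}"
    by (intro finite_lists_length_eq) auto
  ultimately show ?thesis by (rule finite_subset)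
qed

lemma key:
  fixes s :: real
  assumes s: "0 < s" "s < 1"
  shows "s ^ k * (\<Sum>x\<in>states n k. weight s x * (1 - s) ^ nat (phi (dd x))) = 1 - (1 - s) ^ k"
proof -
  have "s ^ k * (\<Sum>x\<in>states n k. weight s x * (1 - s) ^ nat (phi (dd x)))
      = (\<Sum>x\<in>states n k. \<Sum>G\<in>F x. \<Prod>j<k. pp s NN (G j))"
    unfolding sum_distrib_left
  proof (rule sum.cong)
    fix x assume xS: "x \<in> states n k"
    have "nat (phi (dd x)) = (\<Sum>j<k. mx x j)" using phi_eq[OF xS] by (simp only: nat_int)
    then show "s ^ k * (weight s x * (1 - s) ^ nat (phi (dd x))) = (\<Sum>G\<in>F x. \<Prod>j<k. pp s NN (G j))"
      using F_weight[OF s xS] unfolding weight_def by simp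
  qed simp
  also have "\<dots> = (\<Sum>G\<in>\<Union>(F ` states n k). \<Prod>j<k. pp s NN (G j))"
  proof (rule sum.UNION_disjoint[symmetric])
    show "finite (states n k)" by (rule finite_states)
    show "\<forall>x\<in>states n k. finite (F x)" unfolding F_def by (intro ballI finite_PiE) auto
    show "\<forall>x\<in>states n k. \<forall>x'\<in>states n k. x \<noteq> x' \<longrightarrow> F x \<inter> F x' = {}"
      using F_disj by blast
  qed
  also have "\<Union>(F ` states n k) = GG" using F_sub GG_cover by blast
  finally show ?thesis using GG_sum by simp
qed

end

lemma uniq_stat:
  fixes P :: "'a \<Rightarrow> 'a \<Rightarrow> real"
  assumes fin: "finite S" and ne: "S \<noteq> {}" and Ppos: "\<And>x y. x \<in> S \<Longrightarrow> y \<in> S \<Longrightarrow> 0 < P x y"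
    and nupos: "\<And>x. x \<in> S \<Longrightarrow> 0 < nv x" and nusum: "(\<Sum>x\<in>S. nv x) = 1"
    and nust: "\<And>y. y \<in> S \<Longrightarrow> nv y = (\<Sum>x\<in>S. nv x * P x y)"
    and must: "\<And>y. y \<in> S \<Longrightarrow> mv y = (\<Sum>x\<in>S. mv x * P x y)" and musum: "(\<Sum>x\<in>S. mv x) = 1"
  shows "\<forall>x\<in>S. mv x = nv x"
proof -
  define t where "t = Min ((\<lambda>x. mv x / nv x) ` S)"
  have tle: "t \<le> mv x / nv x" if "x \<in> S" for x using fin that unfolding t_def by (intro Min_le) auto
  have "t \<in> (\<lambda>x. mv x / nv x) ` S" unfolding t_def using fin ne by (intro Min_in) auto
  then obtain x0 where x0: "x0 \<in> S" "t = mv x0 / nv x0" by auto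
  define w where "w x = mv x - t * nv x" for x
  have wnn: "0 \<le> w x" if x: "x \<in> S" for x
    using tle[OF x] nupos[OF x] unfolding w_def by (simp add: le_divide_eq)
  have w0: "w x0 = 0" unfolding w_def using x0 nupos[OF x0(1)] by simp
  have wst: "w y = (\<Sum>x\<in>S. w x * P x y)" if y: "y \<in> S" for y
  proof -
    have "w y = (\<Sum>x\<in>S. mv x * P x y) - t * (\<Sum>x\<in>S. nv x * P x y)"
      unfolding w_def by (subst must[OF y], subst nust[OF y]) (rule refl)
    also have "\<dots> = (\<Sum>x\<in>S. w x * P x y)"
      unfolding w_def by (simp add: sum_distrib_left sum_subtractf algebra_simps)
    finally show ?thesis .
  qed
  have s0: "(\<Sum>x\<in>S. w x * P x x0) = 0" using wst[OF x0(1)] w0 by linarith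
  have nn: "0 \<le> w x * P x x0" if "x \<in> S" for x
    by (rule mult_nonneg_nonneg[OF wnn[OF that] less_imp_le[OF Ppos[OF that x0(1)]]])
  have all0: "\<forall>x\<in>S. w x * P x x0 = 0" by (rule iffD1[OF sum_nonneg_eq_0_iff[OF fin nn] s0])
  have wz: "w x = 0" if "x \<in> S" for x
  proof -
    have "w x * P x x0 = 0" using all0 that by blast
    moreover have "P x x0 \<noteq> 0" using Ppos[OF that x0(1)] by simp
    ultimately show ?thesis by simp
  qed
  have mt: "mv x = t * nv x" if "x \<in> S" for x using wz[OF that] unfolding w_def by simp
  have "(\<Sum>x\<in>S. mv x) = t * (\<Sum>x\<in>S. nv x)" using mt by (simp add: sum_distrib_left)
  then have "t = 1" using musum nusum by simp
  then show ?thesis using mt by simp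
qed

lemma y0_in_states:
  assumes "1 \<le> k" "k \<le> n"
  shows "Gap (n - k + 1) # replicate (k - 1) (Gap 1) \<in> states n k"
  unfolding states_def using assms by (auto simp: sum_list_replicate)

theorem mainTheorem1:
  fixes n k :: nat and s :: real
  assumes "1 \<le> k" and "k \<le> n" and "0 < s" and "s < 1"
  shows "(\<forall>y \<in> states n k. nu n k s y = (\<Sum>x \<in> states n k. nu n k s x * trans_prob k s x y))
    \<and> (\<forall>\<mu> :: gap list \<Rightarrow> real.
          (\<forall>x \<in> states n k. 0 \<le> \<mu> x) \<and> (\<Sum>x \<in> states n k. \<mu> x) = 1
          \<and> (\<forall>y \<in> states n k. \<mu> y = (\<Sum>x \<in> states n k. \<mu> x * trans_prob k s x y))
          \<longrightarrow> (\<forall>x \<in> states n k. \<mu> x = nu n k s x))"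
proof -
  let ?S = "states n k"
  define y0 where "y0 = Gap (n - k + 1) # replicate (k - 1) (Gap 1)"
  have y0S: "y0 \<in> ?S" unfolding y0_def using y0_in_states assms by blast
  interpret W0: wh n k y0 by unfold_locales (use assms y0S in auto)
  have fin: "finite ?S" by (rule W0.finite_states)
  have ne: "?S \<noteq> {}" using y0S by blast
  have wpos: "0 < weight s x" for x unfolding weight_def using assms by simp
  define Z where "Z = (\<Sum>z\<in>?S. weight s z)"
  have Zpos: "0 < Z" unfolding Z_def using fin ne wpos by (intro sum_pos) auto
  have qk: "(1 - s) ^ k < 1" using assms by (subst power_less_one_iff) auto
  define C where "C = s ^ k / (1 - (1 - s) ^ k)"
  have Cpos: "0 < C" unfolding C_def using qk assms by simp
  have tp: "trans_prob k s x y = weight s y * C * (1 - s) ^ nat (phi (map2 (-) (absv y) (absv x)))" for x y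
    unfolding trans_prob_def weight_def C_def by simp
  have tppos: "0 < trans_prob k s x y" for x y unfolding tp using wpos Cpos assms by simp
  have nupos: "0 < nu n k s x" for x unfolding nu_def Z_def[symmetric] using wpos Zpos by simp
  have nusum: "(\<Sum>x\<in>?S. nu n k s x) = 1" unfolding nu_def Z_def[symmetric]
    using Zpos by (simp add: sum_divide_distrib[symmetric] Z_def)
  have stat: "nu n k s y = (\<Sum>x\<in>?S. nu n k s x * trans_prob k s x y)" if yS: "y \<in> ?S" for y
  proof -
    interpret W: wh n k y by unfold_locales (use assms yS in auto)
    define A where "A = (\<Sum>x\<in>?S. weight s x * (1 - s) ^ nat (phi (map2 (-) (absv y) (absv x))))"
    have K: "s ^ k * A = 1 - (1 - s) ^ k"
      using W.key[OF assms(3,4)] unfolding W.dd_def A_def .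
    have CA: "C * A = 1"
    proof -
      have "C * A = (s ^ k * A) / (1 - (1 - s) ^ k)" unfolding C_def by simp
      also have "\<dots> = 1" unfolding K using qk by simp
      finally show ?thesis .
    qed
    have tm: "nu n k s x * trans_prob k s x y = (weight s y * C / Z) * (weight s x * (1 - s) ^ nat (phi (map2 (-) (absv y) (absv x))))" for x
      unfolding nu_def Z_def[symmetric] tp by (simp only: times_divide_eq_left times_divide_eq_right mult_ac)
    have "(\<Sum>x\<in>?S. nu n k s x * trans_prob k s x y) = (weight s y * C / Z) * A"
      unfolding tm A_def by (rule sum_distrib_left[symmetric])
    also have "\<dots> = weight s y / Z * (C * A)" by (simp only: times_divide_eq_left times_divide_eq_right mult_ac)
    also have "\<dots> = nu n k s y" unfolding CA nu_def Z_def by simp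
    finally show ?thesis by simp
  qed
  show ?thesis
  proof (intro conjI allI impI ballI)
    fix y assume "y \<in> ?S" then show "nu n k s y = (\<Sum>x\<in>?S. nu n k s x * trans_prob k s x y)" by (rule stat)
  next
    fix \<mu> :: "gap list \<Rightarrow> real" and x
    assume h: "(\<forall>x\<in>?S. 0 \<le> \<mu> x) \<and> (\<Sum>x\<in>?S. \<mu> x) = 1 \<and> (\<forall>y\<in>?S. \<mu> y = (\<Sum>x\<in>?S. \<mu> x * trans_prob k s x y))"
      and x: "x \<in> ?S"
    have m1: "\<And>y. y \<in> ?S \<Longrightarrow> \<mu> y = (\<Sum>x\<in>?S. \<mu> x * trans_prob k s x y)" using h by blast
    have m2: "(\<Sum>x\<in>?S. \<mu> x) = 1" using h by blast
    have "\<forall>x\<in>?S. \<mu> x = nu n k s x"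
      by (rule uniq_stat[OF fin ne tppos nupos nusum stat m1 m2])
    then show "\<mu> x = nu n k s x" using x by blast
  qed
qed

end
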